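(* Let $k>0$ and consider $n$ agents $\mathcal{V}=\{1,\dots,n\}$ with states $q_i\in\mathbb{R}^m$ evolving by $$\ddot q_i=-k\dot q_i-\sum_{j\in\mathcal{N}_i(\sigma(t))}a_{ij}(t)(q_i-q_j)-(q_i-P_{\mathcal{X}_i}(q_i)),$$ where $\mathcal{X}_i\subseteq\mathbb{R}^m$ are closed convex sets, $\sigma$ is a piecewise constant switching signal selecting an undirected graph $\mathcal{G}_{\sigma(t)}$ on $\mathcal{V}$ with neighbor sets $\mathcal{N}_i(\sigma(t))$, and $a_{ij}(t)>0$ are continuous weights. Define $x_i=q_i$ and $x_{n+i}=q_i+\frac{2}{k}\dot q_i$ for $i\in\mathcal{V}$, and $$\delta_i(t)=\frac{4}{k^2}\sum_{j\in\mathcal{N}_i(\sigma(t))}a_{ij}(t)(\dot q_i-\dot q_j)-\frac{2}{k}(q_i-P_{\mathcal{X}_i}(q_i)).$$ Fix a coordinate index $s\in\{1,\dots,m\}$, write $x_i^{(s)}$ for the $s$-th component of $x_i$, and let $\bar{\mathcal{V}}=\{1,\dots,2n\}$, $\hbar(t)=\max_{i\in\bar{\mathcal{V}}}x_i^{(s)}(t)$, $\ell(t)=\min_{i\in\bar{\mathcal{V}}}x_i^{(s)}(t)$. Then for all $t\ge t_0\ge0$, $$D^+\hbar(t)\le\max_{i\in\mathcal{V}}\|\delta_i(t)\|,\qquad D^+\ell(t)\ge-\max_{i\in\mathcal{V}}\|\delta_i(t)\|.$$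
   Context: $D^+f(t)=\limsup_{\tau\to0^+}\frac{f(t+\tau)-f(t)}{\tau}$ is the upper Dini derivative. $P_{\mathcal{X}}(x)$ is the Euclidean projection of $x$ onto the closed convex set $\mathcal{X}$. In the transformed variables the dynamics read $\dot x_i=-\frac k2(x_i-x_{n+i})$ and $\dot x_{n+i}=-\frac k2(x_{n+i}-x_i)-\frac2k\sum_{j\in\mathcal{N}_i(\sigma(t))}a_{ij}(t)(x_{n+i}-x_{n+j})+\delta_i(t)$. *)

theory Defs
  imports "HOL-Analysis.Analysis"
begin

definition Dini_upper :: "(real \<Rightarrow> real) \<Rightarrow> real \<Rightarrow> ereal" where
  "Dini_upper f t = Limsup (at_right 0) (\<lambda>\<tau>. ereal ((f (t + \<tau>) - f t) / \<tau>))"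

definition piecewise_constant :: "(real \<Rightarrow> 'g) \<Rightarrow> bool" where
  "piecewise_constant \<sigma> \<longleftrightarrow>
     (\<forall>a b. finite {t \<in> {a..b}. \<not> (\<exists>e>0. \<forall>u\<in>ball t e. \<sigma> u = \<sigma> t)})"

definition undirected_nbrs :: "nat \<Rightarrow> (nat \<Rightarrow> nat set) \<Rightarrow> bool" where
  "undirected_nbrs n N \<longleftrightarrow>
     (\<forall>i\<in>{1..n}. N i \<subseteq> {1..n} \<and> i \<notin> N i) \<and>
     (\<forall>i\<in>{1..n}. \<forall>j\<in>{1..n}. j \<in> N i \<longleftrightarrow> i \<in> N j)"

definition xvar :: "real \<Rightarrow> nat \<Rightarrow> (nat \<Rightarrow> real \<Rightarrow> real^'m) \<Rightarrow> (nat \<Rightarrow> real \<Rightarrow> real^'m)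
                    \<Rightarrow> nat \<Rightarrow> real \<Rightarrow> real^'m" where
  "xvar k n q q' i t = (if i \<le> n then q i t else q (i - n) t + (2 / k) *\<^sub>R q' (i - n) t)"

definition delta :: "real \<Rightarrow> (real \<Rightarrow> 'g) \<Rightarrow> ('g \<Rightarrow> nat \<Rightarrow> nat set)
     \<Rightarrow> (nat \<Rightarrow> nat \<Rightarrow> real \<Rightarrow> real) \<Rightarrow> (nat \<Rightarrow> (real^'m) set)
     \<Rightarrow> (nat \<Rightarrow> real \<Rightarrow> real^'m) \<Rightarrow> (nat \<Rightarrow> real \<Rightarrow> real^'m) \<Rightarrow> nat \<Rightarrow> real \<Rightarrow> real^'m" where
  "delta k \<sigma> N a X q q' i t =
     (4 / k^2) *\<^sub>R (\<Sum>j\<in>N (\<sigma> t) i. a i j t *\<^sub>R (q' i t - q' j t))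
     - (2 / k) *\<^sub>R (q i t - closest_point (X i) (q i t))"

end

theory Submission imports Defs begin

lemma dini_max_aux:
  fixes I :: "'i set" and f :: "'i \<Rightarrow> real \<Rightarrow> real"
  assumes fin: "finite I" and ne: "I \<noteq> {}"
    and lim: "\<And>i. i \<in> I \<Longrightarrow> ((\<lambda>\<tau>. (f i (t+\<tau>) - f i t)/\<tau>) \<longlongrightarrow> D i) (at_right 0)"
    and act: "\<And>i. i \<in> I \<Longrightarrow> f i t = Max ((\<lambda>i. f i t) ` I) \<Longrightarrow> D i \<le> B"
    and B: "B \<ge> 0"
  shows "Dini_upper (\<lambda>\<tau>. Max ((\<lambda>i. f i \<tau>) ` I)) t \<le> ereal B"
proof (rule ereal_le_epsilon2)
  fix e :: real assume e: "e > 0"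
  define F where "F = Max ((\<lambda>i. f i t) ` I)"
  have pos: "eventually (\<lambda>\<tau>. \<tau> > 0) (at_right (0::real))"
    by (simp add: eventually_at_right_less)
  have each: "eventually (\<lambda>\<tau>. f i (t+\<tau>) \<le> F + \<tau>*(B+e)) (at_right 0)" if i: "i \<in> I" for i
  proof (cases "f i t = F")
    case True
    then have "D i < B + e" using act[OF i] e unfolding F_def by force
    then have "eventually (\<lambda>\<tau>. (f i (t+\<tau>) - f i t)/\<tau> < B + e) (at_right 0)"
      using order_tendstoD(2)[OF lim[OF i]] by blast
    then show ?thesis using pos
    proof eventually_elim
      case (elim \<tau>)
      then have "f i (t+\<tau>) - f i t < (B+e)*\<tau>" by (simp add: divide_less_eq)
      then show ?case using True by (simp add: algebra_simps)
    qed
  next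
    case False
    have "f i t \<le> F" unfolding F_def using fin i by (intro Max_ge) auto
    with False have lt: "f i t < F" by simp
    have "((\<lambda>\<tau>. f i t + \<tau> * ((f i (t+\<tau>) - f i t)/\<tau>)) \<longlongrightarrow> f i t + 0 * D i) (at_right 0)"
      by (intro tendsto_intros lim[OF i])
    then have "eventually (\<lambda>\<tau>. f i t + \<tau> * ((f i (t+\<tau>) - f i t)/\<tau>) < F) (at_right 0)"
      using lt by (intro order_tendstoD(2)) auto
    then show ?thesis using pos
    proof eventually_elim
      case (elim \<tau>)
      then have "f i (t+\<tau>) < F" by simp
      moreover have "0 \<le> \<tau>*(B+e)" using elim B e by simp
      ultimately show ?case by simp
    qed
  qed
  have "eventually (\<lambda>\<tau>. \<forall>i\<in>I. f i (t+\<tau>) \<le> F + \<tau>*(B+e)) (at_right 0)"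
    using fin each by (simp add: eventually_ball_finite)
  then have "eventually (\<lambda>\<tau>. ereal ((Max ((\<lambda>i. f i (t+\<tau>)) ` I) - Max ((\<lambda>i. f i t) ` I)) / \<tau>) \<le> ereal (B + e)) (at_right 0)"
    using pos
  proof eventually_elim
    case (elim \<tau>)
    have "Max ((\<lambda>i. f i (t+\<tau>)) ` I) \<le> F + \<tau>*(B+e)"
      using elim fin ne by (subst Max_le_iff) auto
    then show ?case using elim unfolding F_def by (simp add: divide_le_eq algebra_simps)
  qed
  then show "Dini_upper (\<lambda>\<tau>. Max ((\<lambda>i. f i \<tau>) ` I)) t \<le> ereal B + ereal e"
    unfolding Dini_upper_def by (simp add: Limsup_bounded)
qed

lemma dini_min_aux:
  fixes I :: "'i set" and f :: "'i \<Rightarrow> real \<Rightarrow> real"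
  assumes fin: "finite I" and ne: "I \<noteq> {}"
    and lim: "\<And>i. i \<in> I \<Longrightarrow> ((\<lambda>\<tau>. (f i (t+\<tau>) - f i t)/\<tau>) \<longlongrightarrow> D i) (at_right 0)"
    and act: "\<And>i. i \<in> I \<Longrightarrow> f i t = Min ((\<lambda>i. f i t) ` I) \<Longrightarrow> D i \<ge> - B"
    and B: "B \<ge> 0"
  shows "Dini_upper (\<lambda>\<tau>. Min ((\<lambda>i. f i \<tau>) ` I)) t \<ge> - ereal B"
proof -
  define F where "F = Min ((\<lambda>i. f i t) ` I)"
  have pos: "eventually (\<lambda>\<tau>. \<tau> > 0) (at_right (0::real))"
    by (simp add: eventually_at_right_less)
  have key: "ereal (- B - e) \<le> Dini_upper (\<lambda>\<tau>. Min ((\<lambda>i. f i \<tau>) ` I)) t" if e: "e > 0" for e :: real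
  proof -
  have each: "eventually (\<lambda>\<tau>. f i (t+\<tau>) \<ge> F - \<tau>*(B+e)) (at_right 0)" if i: "i \<in> I" for i
  proof (cases "f i t = F")
    case True
    then have "D i > - B - e" using act[OF i] e unfolding F_def by force
    then have "eventually (\<lambda>\<tau>. (f i (t+\<tau>) - f i t)/\<tau> > - B - e) (at_right 0)"
      using order_tendstoD(1)[OF lim[OF i]] by blast
    then show ?thesis using pos
    proof eventually_elim
      case (elim \<tau>)
      then have "f i (t+\<tau>) - f i t > (- B - e)*\<tau>" by (simp add: less_divide_eq)
      then show ?case using True by (simp add: algebra_simps)
    qed
  next
    case False
    have "f i t \<ge> F" unfolding F_def using fin i by (intro Min_le) auto
    with False have lt: "f i t > F" by simp
    have "((\<lambda>\<tau>. f i t + \<tau> * ((f i (t+\<tau>) - f i t)/\<tau>)) \<longlongrightarrow> f i t + 0 * D i) (at_right 0)"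
      by (intro tendsto_intros lim[OF i])
    then have "eventually (\<lambda>\<tau>. f i t + \<tau> * ((f i (t+\<tau>) - f i t)/\<tau>) > F) (at_right 0)"
      using lt by (intro order_tendstoD(1)) auto
    then show ?thesis using pos
    proof eventually_elim
      case (elim \<tau>)
      then have "f i (t+\<tau>) > F" by simp
      moreover have "0 \<le> \<tau>*(B+e)" using elim B e by simp
      ultimately show ?case by simp
    qed
  qed
  have "eventually (\<lambda>\<tau>. \<forall>i\<in>I. f i (t+\<tau>) \<ge> F - \<tau>*(B+e)) (at_right 0)"
    using fin each by (simp add: eventually_ball_finite)
  then have "eventually (\<lambda>\<tau>. ereal (- B - e) \<le> ereal ((Min ((\<lambda>i. f i (t+\<tau>)) ` I) - Min ((\<lambda>i. f i t) ` I)) / \<tau>)) (at_right 0)"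
    using pos
  proof eventually_elim
    case (elim \<tau>)
    have "Min ((\<lambda>i. f i (t+\<tau>)) ` I) \<ge> F - \<tau>*(B+e)"
      using elim fin ne by (subst Min_ge_iff) auto
    then show ?case using elim unfolding F_def by (simp add: le_divide_eq algebra_simps)
  qed
  then show ?thesis
    unfolding Dini_upper_def by (intro le_Limsup) (simp_all add: trivial_limit_at_right_real)
  qed
  show ?thesis
  proof (rule dense_le)
    fix x assume x: "x < - ereal B"
    show "x \<le> Dini_upper (\<lambda>\<tau>. Min ((\<lambda>i. f i \<tau>) ` I)) t"
    proof (cases x)
      case (real r)
      then have "r < - B" using x by simp
      then have "ereal (- B - (- B - r)) \<le> Dini_upper (\<lambda>\<tau>. Min ((\<lambda>i. f i \<tau>) ` I)) t"
        by (intro key) simp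
      then show ?thesis using real by simp
    qed (use x in auto)
  qed
qed

lemma deriv_to_lim:
  fixes f :: "real \<Rightarrow> real"
  assumes "(f has_real_derivative D) (at t within {t..})"
  shows "((\<lambda>\<tau>. (f (t+\<tau>) - f t)/\<tau>) \<longlongrightarrow> D) (at_right 0)"
proof -
  have "((\<lambda>y. (f y - f t) / (y - t)) \<longlongrightarrow> D) (at_right t)"
    using assms unfolding has_field_derivative_iff at_within_Ici_at_right .
  then show ?thesis unfolding filterlim_at_right_to_0[of _ _ t] by (simp add: add.commute)
qed

lemma vec_deriv_to_lim:
  fixes g :: "real \<Rightarrow> real^'m"
  assumes "(g has_vector_derivative G) (at t within {t..})"
  shows "((\<lambda>\<tau>. (g (t+\<tau>) $ s - g t $ s)/\<tau>) \<longlongrightarrow> G $ s) (at_right 0)"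
proof -
  have "((\<lambda>x. g x $ s) has_vector_derivative G $ s) (at t within {t..})"
    by (rule bounded_linear.has_vector_derivative[OF bounded_linear_vec_nth assms])
  then show ?thesis
    by (intro deriv_to_lim[where f="\<lambda>x. g x $ s"]) (simp add: has_real_derivative_iff_has_vector_derivative)
qed

theorem lemma2:
  fixes k :: real and n :: nat and t0 :: real and s :: "'m::finite"
    and q q' q'' :: "nat \<Rightarrow> real \<Rightarrow> real^'m"
    and \<sigma> :: "real \<Rightarrow> 'g" and N :: "'g \<Rightarrow> nat \<Rightarrow> nat set"
    and a :: "nat \<Rightarrow> nat \<Rightarrow> real \<Rightarrow> real"
    and X :: "nat \<Rightarrow> (real^'m) set"
  assumes k_pos: "k > 0"
    and n_pos: "n \<ge> 1"
    and t0_nonneg: "t0 \<ge> 0"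
    and X_cc: "\<And>i. i \<in> {1..n} \<Longrightarrow> closed (X i) \<and> convex (X i) \<and> X i \<noteq> {}"
    and sigma_pc: "piecewise_constant \<sigma>"
    and graphs: "\<And>g. undirected_nbrs n (N g)"
    and a_cont: "\<And>i j. i \<in> {1..n} \<Longrightarrow> j \<in> {1..n} \<Longrightarrow> continuous_on UNIV (a i j)"
    and a_pos: "\<And>i j t. i \<in> {1..n} \<Longrightarrow> j \<in> N (\<sigma> t) i \<Longrightarrow> a i j t > 0"
    and q_deriv: "\<And>i t. i \<in> {1..n} \<Longrightarrow> t \<ge> t0 \<Longrightarrow>
         (q i has_vector_derivative q' i t) (at t within {t0..})"
    and q'_deriv: "\<And>i t. i \<in> {1..n} \<Longrightarrow> t \<ge> t0 \<Longrightarrow>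
         (q' i has_vector_derivative q'' i t) (at t within {t..})"
    and dyn: "\<And>i t. i \<in> {1..n} \<Longrightarrow> t \<ge> t0 \<Longrightarrow>
         q'' i t = - k *\<^sub>R q' i t
                   - (\<Sum>j\<in>N (\<sigma> t) i. a i j t *\<^sub>R (q i t - q j t))
                   - (q i t - closest_point (X i) (q i t))"
  shows "\<forall>t \<ge> t0.
     Dini_upper (\<lambda>\<tau>. Max ((\<lambda>i. xvar k n q q' i \<tau> $ s) ` {1..2*n})) t
        \<le> ereal (Max ((\<lambda>i. norm (delta k \<sigma> N a X q q' i t)) ` {1..n}))
     \<and> Dini_upper (\<lambda>\<tau>. Min ((\<lambda>i. xvar k n q q' i \<tau> $ s) ` {1..2*n})) t
        \<ge> - ereal (Max ((\<lambda>i. norm (delta k \<sigma> N a X q q' i t)) ` {1..n}))"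
proof (intro allI impI)
  fix t assume tt0: "t \<ge> t0"
  define B where "B = Max ((\<lambda>i. norm (delta k \<sigma> N a X q q' i t)) ` {1..n})"
  define f where "f = (\<lambda>i \<tau>. xvar k n q q' i \<tau> $ s)"
  define D where "D = (\<lambda>i. if i \<le> n then q' i t $ s else q' (i-n) t $ s + (2/k) * (q'' (i-n) t $ s))"
  have B0: "B \<ge> 0" unfolding B_def using n_pos
    by (intro order_trans[OF norm_ge_zero Max_ge[where x="norm (delta k \<sigma> N a X q q' 1 t)"]]) auto
  have normB: "norm (delta k \<sigma> N a X q q' j t) \<le> B" if "j \<in> {1..n}" for j
    unfolding B_def using that by (intro Max_ge) auto
  have Nsub: "N g j \<subseteq> {1..n}" if "j \<in> {1..n}" for g j
    using graphs[of g] that unfolding undirected_nbrs_def by auto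
  have xlow: "xvar k n q q' j \<tau> = q j \<tau>" if "j \<in> {1..n}" for j \<tau>
    using that by (simp add: xvar_def)
  have xhigh: "xvar k n q q' (n+j) \<tau> = q j \<tau> + (2/k) *\<^sub>R q' j \<tau>" if "j \<in> {1..n}" for j \<tau>
    using that by (simp add: xvar_def)
  have lim: "((\<lambda>\<tau>. (f i (t+\<tau>) - f i t)/\<tau>) \<longlongrightarrow> D i) (at_right 0)" if i: "i \<in> {1..2*n}" for i
  proof (cases "i \<le> n")
    case True
    then have i1: "i \<in> {1..n}" using i by auto
    have "(q i has_vector_derivative q' i t) (at t within {t..})"
      using q_deriv[OF i1 tt0] by (rule has_vector_derivative_within_subset) (use tt0 in auto)
    from vec_deriv_to_lim[OF this, of s] show ?thesis
      using True by (simp add: f_def D_def xlow[OF i1])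
  next
    case False
    define j where "j = i - n"
    have j1: "j \<in> {1..n}" and ij: "i = n + j" using i False by (auto simp: j_def)
    have d1: "(q j has_vector_derivative q' j t) (at t within {t..})"
      using q_deriv[OF j1 tt0] by (rule has_vector_derivative_within_subset) (use tt0 in auto)
    have d2: "((\<lambda>\<tau>. (2/k) *\<^sub>R q' j \<tau>) has_vector_derivative (2/k) *\<^sub>R q'' j t) (at t within {t..})"
      using has_vector_derivative_scaleR[OF DERIV_const q'_deriv[OF j1 tt0], of "2/k"] by simp
    have "((\<lambda>\<tau>. q j \<tau> + (2/k) *\<^sub>R q' j \<tau>) has_vector_derivative q' j t + (2/k) *\<^sub>R q'' j t) (at t within {t..})"
      by (rule has_vector_derivative_add[OF d1 d2])
    from vec_deriv_to_lim[OF this, of s] show ?thesis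
      using False by (simp add: f_def D_def ij xhigh[OF j1])
  qed
  have Dhigh: "D (n+j) = delta k \<sigma> N a X q q' j t $ s - q' j t $ s
      - (2/k) * (\<Sum>l\<in>N (\<sigma> t) j. a j l t * (f (n+j) t - f (n+l) t))" if j1: "j \<in> {1..n}" for j
  proof -
    have fs: "f (n+l) t = q l t $ s + (2/k) * q' l t $ s" if "l \<in> N (\<sigma> t) j" for l
    proof -
      have "l \<in> {1..n}" using Nsub[OF j1] that by blast
      then show ?thesis by (simp add: f_def xhigh)
    qed
    have fj: "f (n+j) t = q j t $ s + (2/k) * q' j t $ s"
      using j1 by (simp add: f_def xhigh)
    have "(\<Sum>l\<in>N (\<sigma> t) j. a j l t * (f (n+j) t - f (n+l) t))
        = (\<Sum>l\<in>N (\<sigma> t) j. a j l t * (q j t $ s - q l t $ s) + (2/k) * (a j l t * (q' j t $ s - q' l t $ s)))"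
    proof (rule sum.cong[OF refl])
      fix l assume l: "l \<in> N (\<sigma> t) j"
      show "a j l t * (f (n+j) t - f (n+l) t) = a j l t * (q j t $ s - q l t $ s) + (2/k) * (a j l t * (q' j t $ s - q' l t $ s))"
        unfolding fs[OF l] fj by (simp add: algebra_simps)
    qed
    also have "\<dots> = (\<Sum>l\<in>N (\<sigma> t) j. a j l t * (q j t $ s - q l t $ s)) + (2/k) * (\<Sum>l\<in>N (\<sigma> t) j. a j l t * (q' j t $ s - q' l t $ s))"
      by (simp add: sum.distrib sum_distrib_left)
    finally have S: "(\<Sum>l\<in>N (\<sigma> t) j. a j l t * (f (n+j) t - f (n+l) t)) = \<dots>" .
    define S1 where "S1 = (\<Sum>l\<in>N (\<sigma> t) j. a j l t * (q j t $ s - q l t $ s))"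
    define S2 where "S2 = (\<Sum>l\<in>N (\<sigma> t) j. a j l t * (q' j t $ s - q' l t $ s))"
    define r where "r = (q j t - closest_point (X j) (q j t)) $ s"
    have qc: "q'' j t $ s = - k * q' j t $ s - S1 - r"
      by (simp add: dyn[OF j1 tt0] S1_def r_def algebra_simps)
    have dc: "delta k \<sigma> N a X q q' j t $ s = 4 / k^2 * S2 - 2 / k * r"
      by (simp add: delta_def S2_def r_def algebra_simps)
    have Dc: "D (n+j) = q' j t $ s + (2/k) * (q'' j t $ s)"
      using j1 by (simp add: D_def)
    have e: "q' j t $ s + (2/k) * (- k * q' j t $ s - S1 - r) = (4 / k^2 * S2 - 2 / k * r) - q' j t $ s - (2/k) * (S1 + (2/k) * S2)"
      using k_pos by (simp add: field_simps power2_eq_square)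
    show ?thesis
      unfolding S Dc qc dc using e by (simp add: S1_def S2_def)
  qed
  have kk: "2/k > 0" using k_pos by simp
  have fl: "f j t = q j t $ s" if "j \<in> {1..n}" for j using that by (simp add: f_def xlow)
  have fh: "f (n+j) t = q j t $ s + (2/k) * q' j t $ s" if "j \<in> {1..n}" for j
    using that by (simp add: f_def xhigh)
  have comp: "\<bar>delta k \<sigma> N a X q q' j t $ s\<bar> \<le> B" if "j \<in> {1..n}" for j
    using component_le_norm_cart normB[OF that] order_trans by blast
  have fin: "finite {1..2*n}" and ne: "{1..2*n} \<noteq> {}" using n_pos by auto
  have "Dini_upper (\<lambda>\<tau>. Max ((\<lambda>i. f i \<tau>) ` {1..2*n})) t \<le> ereal B"
  proof (rule dini_max_aux[where D=D, OF fin ne lim _ B0])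
    fix i assume i: "i \<in> {1..2*n}" and ac: "f i t = Max ((\<lambda>i. f i t) ` {1..2*n})"
    have ge: "f m t \<le> f i t" if "m \<in> {1..2*n}" for m
      unfolding ac using that fin by (intro Max_ge) auto
    show "D i \<le> B"
    proof (cases "i \<le> n")
      case True
      then have i1: "i \<in> {1..n}" using i by auto
      have "f (n+i) t \<le> f i t" using ge[of "n+i"] i1 by auto
      then have "(2/k) * q' i t $ s \<le> 0" using fl[OF i1] fh[OF i1] by simp
      then have "q' i t $ s \<le> 0" using k_pos by (auto simp: divide_le_0_iff zero_le_divide_iff)
      then show ?thesis using B0 True by (simp add: D_def)
    next
      case False
      define j where "j = i - n"
      have j1: "j \<in> {1..n}" and ij: "i = n + j" using i False by (auto simp: j_def)
      have "f j t \<le> f (n+j) t" using ge[of j] j1 ij by auto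
      then have "(2/k) * q' j t $ s \<ge> 0" using fl[OF j1] fh[OF j1] by simp
      then have q'p: "q' j t $ s \<ge> 0" using k_pos by (auto simp: divide_le_0_iff zero_le_divide_iff)
      have sp: "(\<Sum>l\<in>N (\<sigma> t) j. a j l t * (f (n+j) t - f (n+l) t)) \<ge> 0"
      proof (rule sum_nonneg)
        fix l assume l: "l \<in> N (\<sigma> t) j"
        have "l \<in> {1..n}" using Nsub[OF j1] l by blast
        then have "f (n+l) t \<le> f (n+j) t" using ge[of "n+l"] ij by auto
        moreover have "a j l t > 0" using a_pos[OF j1 l] .
        ultimately show "a j l t * (f (n+j) t - f (n+l) t) \<ge> 0" by simp
      qed
      have "(2/k) * (\<Sum>l\<in>N (\<sigma> t) j. a j l t * (f (n+j) t - f (n+l) t)) \<ge> 0"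
        using sp kk by simp
      then show ?thesis unfolding ij Dhigh[OF j1] using comp[OF j1] q'p by linarith
    qed
  qed
  moreover
  have "Dini_upper (\<lambda>\<tau>. Min ((\<lambda>i. f i \<tau>) ` {1..2*n})) t \<ge> - ereal B"
  proof (rule dini_min_aux[where D=D, OF fin ne lim _ B0])
    fix i assume i: "i \<in> {1..2*n}" and ac: "f i t = Min ((\<lambda>i. f i t) ` {1..2*n})"
    have ge: "f m t \<ge> f i t" if "m \<in> {1..2*n}" for m
      unfolding ac using that fin by (intro Min_le) auto
    show "D i \<ge> - B"
    proof (cases "i \<le> n")
      case True
      then have i1: "i \<in> {1..n}" using i by auto
      have "f (n+i) t \<ge> f i t" using ge[of "n+i"] i1 by auto
      then have "(2/k) * q' i t $ s \<ge> 0" using fl[OF i1] fh[OF i1] by simp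
      then have "q' i t $ s \<ge> 0" using k_pos by (auto simp: divide_le_0_iff zero_le_divide_iff)
      then show ?thesis using B0 True by (simp add: D_def)
    next
      case False
      define j where "j = i - n"
      have j1: "j \<in> {1..n}" and ij: "i = n + j" using i False by (auto simp: j_def)
      have "f j t \<ge> f (n+j) t" using ge[of j] j1 ij by auto
      then have "(2/k) * q' j t $ s \<le> 0" using fl[OF j1] fh[OF j1] by simp
      then have q'p: "q' j t $ s \<le> 0" using k_pos by (auto simp: divide_le_0_iff zero_le_divide_iff)
      have sp: "(\<Sum>l\<in>N (\<sigma> t) j. a j l t * (f (n+j) t - f (n+l) t)) \<le> 0"
      proof (rule sum_nonpos)
        fix l assume l: "l \<in> N (\<sigma> t) j"
        have "l \<in> {1..n}" using Nsub[OF j1] l by blast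
        then have "f (n+l) t \<ge> f (n+j) t" using ge[of "n+l"] ij by auto
        moreover have "a j l t > 0" using a_pos[OF j1 l] .
        ultimately show "a j l t * (f (n+j) t - f (n+l) t) \<le> 0" by (simp add: mult_le_0_iff)
      qed
      have "(2/k) * (\<Sum>l\<in>N (\<sigma> t) j. a j l t * (f (n+j) t - f (n+l) t)) \<le> 0"
        using sp kk by (intro mult_nonneg_nonpos) auto
      then show ?thesis unfolding ij Dhigh[OF j1] using comp[OF j1] q'p by linarith
    qed
  qed
  ultimately show "Dini_upper (\<lambda>\<tau>. Max ((\<lambda>i. xvar k n q q' i \<tau> $ s) ` {1..2*n})) t \<le> ereal B
     \<and> Dini_upper (\<lambda>\<tau>. Min ((\<lambda>i. xvar k n q q' i \<tau> $ s) ` {1..2*n})) t \<ge> - ereal B"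
    unfolding f_def by simp
qed
end
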